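(* $\operatorname{conv}(M^\Lambda)=\operatorname{proj}_{(\lambda,w)}\bigl(\mathrm{RLT}_d(\Lambda)\bigr)=R$, where $$R=\Bigl\{(\lambda,w)\ \Bigm|\ w\ge0,\ \sum_{j\in E}w_j=1,\ \lambda_{ij_i}=\sum_{p\in E:\,p_i=j_i}w_p\ \text{ for }i\in[d],\ j\in E\Bigr\}.$$
   Context: Let $d,n$ be positive integers, $[d]=\{1,\dots,d\}$, $E=\{0,\dots,n\}^d$. $\Lambda_i=\{\lambda_i\in\mathbb{R}^{n+1}\mid\sum_{j=0}^n\lambda_{ij}=1,\lambda_i\ge0\}$, $\Lambda=\prod_{i=1}^d\Lambda_i$, and $M^\Lambda=\{(\lambda,w)\mid\lambda\in\Lambda,\ w_j=\prod_{i=1}^d\lambda_{ij_i}\text{ for }j\in E\}$. $\mathrm{RLT}_d(\Lambda)$ is the $d$-th level reformulation-linearization relaxation of $\Lambda$: for each $I\subseteq[d]$ and map $j:I\to\{0,\dots,n\}$ introduce a variable $y_{(I,j)}$ linearizing $\prod_{i\in I}\lambda_{ij(i)}$, with $y_{(\emptyset,\cdot)}=1$, $y_{(\{i\},j)}=\lambda_{ij(i)}$ and $w_j=y_{([d],j)}$ for $j\in E$. The constraints are the linearizations of the products $\prod_{i\in I}\lambda_{ij(i)}\cdot\prod_{i\notin I}(1-\sum_{k=0}^n\lambda_{ik})$ of one constraint factor per block: $y_{([d],j)}\ge0$ for all $j\in E$, and for every proper subset $I\subsetneq[d]$ and $j:I\to\{0,\dots,n\}$, $\sum_{I\subseteq I'\subseteq[d]}(-1)^{|I'\setminus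 I|}\sum_{j':I'\to\{0,\dots,n\},\ j'|_I=j}y_{(I',j')}=0$. *)

theory Defs
  imports "HOL-Analysis.Analysis" "HOL-Library.Function_Algebras"
begin

instantiation "fun" :: (type, real_vector) real_vector
begin
definition scaleR_fun :: "real \<Rightarrow> ('a \<Rightarrow> 'b) \<Rightarrow> 'a \<Rightarrow> 'b"
  where "scaleR_fun r f = (\<lambda>x. r *\<^sub>R f x)"
instance
  by standard (simp_all add: scaleR_fun_def fun_eq_iff plus_fun_def scaleR_add_right scaleR_add_left)
end

text \<open>Points are pairs (lam, w) with lam i j the coordinate lambda_{ij} (i in {1..d},
 j in {0..n}) and w j the coordinate indexed by j in E (extensional maps {1..d} -> {0..n}).
 Coordinates outside these index ranges are fixed to 0, so that the points live in a real
 vector space isomorphic to the finite-dimensional coordinate space.\<close>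

definition Eset :: "nat \<Rightarrow> nat \<Rightarrow> (nat \<Rightarrow> nat) set" where
  "Eset d n = PiE {1..d} (\<lambda>_. {0..n})"

definition zero_outside :: "nat \<Rightarrow> nat \<Rightarrow> (nat \<Rightarrow> nat \<Rightarrow> real) \<Rightarrow> ((nat \<Rightarrow> nat) \<Rightarrow> real) \<Rightarrow> bool" where
  "zero_outside d n lam w \<longleftrightarrow>
     (\<forall>i j. (i \<notin> {1..d} \<or> j \<notin> {0..n}) \<longrightarrow> lam i j = 0) \<and>
     (\<forall>j. j \<notin> Eset d n \<longrightarrow> w j = 0)"

definition inLambda :: "nat \<Rightarrow> nat \<Rightarrow> (nat \<Rightarrow> nat \<Rightarrow> real) \<Rightarrow> bool" where
  "inLambda d n lam \<longleftrightarrow>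
     (\<forall>i\<in>{1..d}. (\<forall>j\<in>{0..n}. lam i j \<ge> 0) \<and> (\<Sum>j\<in>{0..n}. lam i j) = 1)"

definition MLambda :: "nat \<Rightarrow> nat \<Rightarrow> ((nat \<Rightarrow> nat \<Rightarrow> real) \<times> ((nat \<Rightarrow> nat) \<Rightarrow> real)) set" where
  "MLambda d n = {(lam, w). zero_outside d n lam w \<and> inLambda d n lam \<and>
      (\<forall>j\<in>Eset d n. w j = (\<Prod>i\<in>{1..d}. lam i (j i)))}"

text \<open>Variables y (I, j) for I a subset of {1..d} and j an extensional map I -> {0..n}.\<close>

definition RLT :: "nat \<Rightarrow> nat \<Rightarrow> (nat set \<times> (nat \<Rightarrow> nat) \<Rightarrow> real) set" where
  "RLT d n = {y.
     y ({}, (\<lambda>_. undefined)) = 1 \<and>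
     (\<forall>j\<in>Eset d n. y ({1..d}, j) \<ge> 0) \<and>
     (\<forall>I. I \<subset> {1..d} \<longrightarrow> (\<forall>j\<in>PiE I (\<lambda>_. {0..n}).
        (\<Sum>I'\<in>{I'. I \<subseteq> I' \<and> I' \<subseteq> {1..d}}.
           (-1::real) ^ card (I' - I) *
           (\<Sum>j'\<in>{j'\<in>PiE I' (\<lambda>_. {0..n}). restrict j' I = j}. y (I', j'))) = 0))}"

definition projRLT :: "nat \<Rightarrow> nat \<Rightarrow> ((nat \<Rightarrow> nat \<Rightarrow> real) \<times> ((nat \<Rightarrow> nat) \<Rightarrow> real)) set" where
  "projRLT d n = {(lam, w). zero_outside d n lam w \<and>
     (\<exists>y\<in>RLT d n.
        (\<forall>i\<in>{1..d}. \<forall>j\<in>{0..n}. lam i j = y ({i}, restrict (\<lambda>_. j) {i})) \<and>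
        (\<forall>j\<in>Eset d n. w j = y ({1..d}, j)))}"

definition Rset :: "nat \<Rightarrow> nat \<Rightarrow> ((nat \<Rightarrow> nat \<Rightarrow> real) \<times> ((nat \<Rightarrow> nat) \<Rightarrow> real)) set" where
  "Rset d n = {(lam, w). zero_outside d n lam w \<and>
     (\<forall>j\<in>Eset d n. w j \<ge> 0) \<and> (\<Sum>j\<in>Eset d n. w j) = 1 \<and>
     (\<forall>i\<in>{1..d}. \<forall>j\<in>Eset d n. lam i (j i) = (\<Sum>p\<in>{p\<in>Eset d n. p i = j i}. w p))}"

end

theory Submission
  imports Defs
begin

lemma alt_sum:
  assumes "finite D" "I \<subset> D"
  shows "(\<Sum>I'\<in>{I'. I \<subseteq> I' \<and> I' \<subseteq> D}. (-1::real) ^ card (I' - I)) = 0"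
proof -
  obtain x where "x \<in> D - I" using psubset_imp_ex_mem[OF assms(2)] by blast
  then have x: "x \<in> D" "x \<notin> I" by auto
  let ?S = "{I'. I \<subseteq> I' \<and> I' \<subseteq> D}"
  let ?S1 = "{I'\<in>?S. x \<notin> I'}"
  let ?S2 = "{I'\<in>?S. x \<in> I'}"
  have fin: "finite ?S"
  proof (rule finite_subset)
    show "?S \<subseteq> Pow D" by blast
    show "finite (Pow D)" using assms(1) by simp
  qed
  have split: "(\<Sum>I'\<in>?S. (-1::real) ^ card (I' - I)) = (\<Sum>I'\<in>?S1. (-1::real) ^ card (I' - I)) + (\<Sum>I'\<in>?S2. (-1::real) ^ card (I' - I))"
  proof -
    have "?S = ?S1 \<union> ?S2" by auto
    moreover have "finite ?S1" by (rule finite_subset[OF _ fin]) blast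
    moreover have "finite ?S2" by (rule finite_subset[OF _ fin]) blast
    moreover have "?S1 \<inter> ?S2 = {}" by blast
    ultimately show ?thesis by (metis (no_types, lifting) sum.union_disjoint)
  qed
  have S2: "?S2 = insert x ` ?S1"
  proof (intro equalityI subsetI)
    fix A assume A: "A \<in> ?S2"
    then have "A = insert x (A - {x})" "A - {x} \<in> ?S1" using x by auto
    then show "A \<in> insert x ` ?S1" by blast
  next
    fix A assume "A \<in> insert x ` ?S1"
    then obtain B where "B \<in> ?S1" "A = insert x B" by blast
    then show "A \<in> ?S2" using x by blast
  qed
  have inj: "inj_on (insert x) ?S1"
    by (rule inj_onI) (metis (no_types, lifting) mem_Collect_eq Diff_insert_absorb)
  have "(\<Sum>I'\<in>?S2. (-1::real) ^ card (I' - I)) = (\<Sum>I'\<in>?S1. (-1::real) ^ card (insert x I' - I))"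
    unfolding S2 by (rule sum.reindex[OF inj, unfolded comp_def])
  also have "\<dots> = (\<Sum>I'\<in>?S1. - ((-1::real) ^ card (I' - I)))"
  proof (rule sum.cong)
    fix I' assume "I' \<in> ?S1"
    then have I'D: "I' \<subseteq> D" "x \<notin> I'" by auto
    have fI': "finite I'" using finite_subset[OF I'D(1) assms(1)] .
    have "insert x I' - I = insert x (I' - I)" "x \<notin> I' - I" "finite (I' - I)"
      using x I'D fI' by auto
    then show "(-1::real) ^ card (insert x I' - I) = - ((-1::real) ^ card (I' - I))" by simp
  qed simp
  finally show ?thesis using split by (simp add: sum_negf)
qed

lemma restrict_in_PiE:
  assumes "p \<in> Eset d n" "I \<subseteq> {1..d}"
  shows "restrict p I \<in> PiE I (\<lambda>_. {0..n})"
  using assms by (auto simp: Eset_def PiE_iff)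

lemma finite_Eset: "finite (Eset d n)"
  by (simp add: Eset_def finite_PiE)

lemma fiber_sum:
  fixes f :: "(nat \<Rightarrow> nat) \<Rightarrow> real"
  assumes "I \<subseteq> I'" "I' \<subseteq> {1..d}"
  shows "(\<Sum>j'\<in>{j'\<in>PiE I' (\<lambda>_. {0..n}). restrict j' I = j}.
            (\<Sum>p\<in>{p\<in>Eset d n. restrict p I' = j'}. f p))
         = (\<Sum>p\<in>{p\<in>Eset d n. restrict p I = j}. f p)"
proof -
  let ?S = "{p\<in>Eset d n. restrict p I = j}"
  let ?T = "{j'\<in>PiE I' (\<lambda>_. {0..n}). restrict j' I = j}"
  have fS: "finite ?S" using finite_Eset by auto
  have fI': "finite I'" using finite_subset[OF assms(2)] by simp
  have fT: "finite ?T"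
  proof (rule finite_subset)
    show "?T \<subseteq> PiE I' (\<lambda>_. {0..n})" by blast
    show "finite (PiE I' (\<lambda>_. {0..n}))" using fI' by (simp add: finite_PiE)
  qed
  have rr: "restrict (restrict p I') I = restrict p I" for p :: "nat \<Rightarrow> nat"
    using assms(1) by (simp add: restrict_restrict Int_absorb1)
  have img: "(\<lambda>p. restrict p I') ` ?S \<subseteq> ?T"
  proof (rule image_subsetI)
    fix p assume p: "p \<in> ?S"
    then have "restrict p I' \<in> PiE I' (\<lambda>_. {0..n})" using restrict_in_PiE[OF _ assms(2)] by blast
    moreover have "restrict (restrict p I') I = j" using p rr by simp
    ultimately show "restrict p I' \<in> ?T" by blast
  qed
  have "(\<Sum>j'\<in>?T. (\<Sum>p\<in>{p\<in>?S. restrict p I' = j'}. f p)) = (\<Sum>p\<in>?S. f p)"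
    by (rule sum.group[OF fS fT img])
  moreover have "{p\<in>?S. restrict p I' = j'} = {p\<in>Eset d n. restrict p I' = j'}" if "j' \<in> ?T" for j'
    using that rr by auto
  ultimately show ?thesis by (metis (no_types, lifting) sum.cong)
qed

lemma rlt_marg:
  assumes y: "y \<in> RLT d n"
  shows "I \<subseteq> {1..d} \<Longrightarrow> j \<in> PiE I (\<lambda>_. {0..n}) \<Longrightarrow>
     y (I, j) = (\<Sum>p\<in>{p\<in>Eset d n. restrict p I = j}. y ({1..d}, p))"
proof (induction "card ({1..d} - I)" arbitrary: I j rule: less_induct)
  case less
  show ?case
  proof (cases "I = {1..d}")
    case True
    have "{p\<in>Eset d n. restrict p I = j} = {j}"
      using less.prems True by (auto simp: Eset_def PiE_restrict)
    then show ?thesis using True by simp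
  next
    case False
    then have psub: "I \<subset> {1..d}" using less.prems by auto
    let ?S = "{I'. I \<subseteq> I' \<and> I' \<subseteq> {1..d}}"
    let ?F = "\<lambda>I'. (\<Sum>j'\<in>{j'\<in>PiE I' (\<lambda>_. {0..n}). restrict j' I = j}. y (I', j'))"
    let ?W = "(\<Sum>p\<in>{p\<in>Eset d n. restrict p I = j}. y ({1..d}, p))"
    have fin: "finite ?S"
    proof (rule finite_subset)
      show "?S \<subseteq> Pow {1..d}" by blast
    qed simp
    have cons: "(\<Sum>I'\<in>?S. (-1::real) ^ card (I' - I) * ?F I') = 0"
      using y psub less.prems(2) unfolding RLT_def by blast
    have FI: "?F I = y (I, j)"
    proof -
      have "{j'\<in>PiE I (\<lambda>_. {0..n}). restrict j' I = j} = {j}"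
        using less.prems by (auto simp: PiE_restrict)
      then show ?thesis by simp
    qed
    have Fo: "?F I' = ?W" if "I' \<in> ?S - {I}" for I'
    proof -
      have I': "I \<subseteq> I'" "I' \<subseteq> {1..d}" "I' \<noteq> I" using that by auto
      have "card ({1..d} - I') < card ({1..d} - I)"
        by (rule psubset_card_mono) (use I' in auto)
      then have "y (I', j') = (\<Sum>p\<in>{p\<in>Eset d n. restrict p I' = j'}. y ({1..d}, p))"
        if "j' \<in> PiE I' (\<lambda>_. {0..n})" for j'
        using less.hyps I'(2) that by blast
      then have "?F I' = (\<Sum>j'\<in>{j'\<in>PiE I' (\<lambda>_. {0..n}). restrict j' I = j}.
            (\<Sum>p\<in>{p\<in>Eset d n. restrict p I' = j'}. y ({1..d}, p)))"
        by (intro sum.cong) auto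
      also have "\<dots> = ?W" by (rule fiber_sum[OF I'(1,2)])
      finally show ?thesis .
    qed
    have "0 = (\<Sum>I'\<in>?S. (-1::real) ^ card (I' - I) * ?F I')" using cons by simp
    also have "\<dots> = (-1::real) ^ card (I - I) * ?F I + (\<Sum>I'\<in>?S - {I}. (-1::real) ^ card (I' - I) * ?F I')"
      using fin less.prems(1) by (subst sum.remove[of _ I]) auto
    also have "\<dots> = y (I, j) + (\<Sum>I'\<in>?S - {I}. (-1::real) ^ card (I' - I)) * ?W"
      using FI Fo by (simp add: sum_distrib_right)
    also have "(\<Sum>I'\<in>?S - {I}. (-1::real) ^ card (I' - I)) = (\<Sum>I'\<in>?S. (-1::real) ^ card (I' - I)) - 1"
      using fin less.prems(1) by (subst sum.remove[of _ I]) auto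
    also have "\<dots> = -1" using alt_sum[OF _ psub] by simp
    finally show ?thesis by linarith
  qed
qed


lemma restrict_single_eq: "restrict f {i} = restrict g {i} \<longleftrightarrow> f i = g i"
  by (auto simp: fun_eq_iff restrict_def)

lemma Eset_restrict_D: "j \<in> Eset d n \<Longrightarrow> {p\<in>Eset d n. restrict p {1..d} = j} = {j}"
  by (auto simp: Eset_def PiE_restrict)

lemma proj_sub_R: "projRLT d n \<subseteq> Rset d n"
proof safe
  fix lam w assume "(lam, w) \<in> projRLT d n"
  then obtain y where zo: "zero_outside d n lam w" and y: "y \<in> RLT d n"
    and lamy: "\<forall>i\<in>{1..d}. \<forall>j\<in>{0..n}. lam i j = y ({i}, restrict (\<lambda>_. j) {i})"
    and wy: "\<forall>j\<in>Eset d n. w j = y ({1..d}, j)"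
    unfolding projRLT_def by blast
  have y0: "y ({}, (\<lambda>_. undefined)) = 1" and ynn: "\<forall>j\<in>Eset d n. y ({1..d}, j) \<ge> 0"
    using y unfolding RLT_def by auto
  have "y ({}, (\<lambda>_. undefined)) = (\<Sum>p\<in>{p\<in>Eset d n. restrict p {} = (\<lambda>_. undefined)}. y ({1..d}, p))"
    by (rule rlt_marg[OF y]) auto
  also have "{p\<in>Eset d n. restrict p {} = (\<lambda>_. undefined)} = Eset d n" by auto
  finally have s1: "(\<Sum>j\<in>Eset d n. w j) = 1" using y0 wy by simp
  have marg: "lam i (j i) = (\<Sum>p\<in>{p\<in>Eset d n. p i = j i}. w p)" if i: "i \<in> {1..d}" and j: "j \<in> Eset d n" for i j
  proof -
    have ji: "j i \<in> {0..n}" using i j by (auto simp: Eset_def)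
    have "lam i (j i) = y ({i}, restrict (\<lambda>_. j i) {i})" using lamy i ji by blast
    also have "\<dots> = (\<Sum>p\<in>{p\<in>Eset d n. restrict p {i} = restrict (\<lambda>_. j i) {i}}. y ({1..d}, p))"
      by (rule rlt_marg[OF y]) (use i ji in auto)
    also have "{p\<in>Eset d n. restrict p {i} = restrict (\<lambda>_. j i) {i}} = {p\<in>Eset d n. p i = j i}"
      by (simp add: restrict_single_eq)
    finally show ?thesis using wy by simp
  qed
  show "(lam, w) \<in> Rset d n"
    unfolding Rset_def using zo s1 marg wy ynn by auto
qed

lemma R_sub_proj: "Rset d n \<subseteq> projRLT d n"
proof safe
  fix lam w assume "(lam, w) \<in> Rset d n"
  then have zo: "zero_outside d n lam w" and wnn: "\<forall>j\<in>Eset d n. w j \<ge> 0"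
    and s1: "(\<Sum>j\<in>Eset d n. w j) = 1"
    and marg: "\<forall>i\<in>{1..d}. \<forall>j\<in>Eset d n. lam i (j i) = (\<Sum>p\<in>{p\<in>Eset d n. p i = j i}. w p)"
    unfolding Rset_def by auto
  define y where "y = (\<lambda>(I, j). (\<Sum>p\<in>{p\<in>Eset d n. restrict p I = j}. w p))"
  have yD: "y ({1..d}, j) = w j" if "j \<in> Eset d n" for j
    unfolding y_def using Eset_restrict_D[OF that] by simp
  have "y \<in> RLT d n"
    unfolding RLT_def
  proof (intro CollectI conjI ballI allI impI)
    have "{p\<in>Eset d n. restrict p {} = (\<lambda>_. undefined)} = Eset d n" by auto
    then show "y ({}, (\<lambda>_. undefined)) = 1" using s1 by (simp add: y_def)
  next
    fix j assume "j \<in> Eset d n" then show "0 \<le> y ({1..d}, j)" using yD wnn by simp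
  next
    fix I j assume I: "I \<subset> {1..d}" and j: "j \<in> PiE I (\<lambda>_. {0..n})"
    let ?W = "(\<Sum>p\<in>{p\<in>Eset d n. restrict p I = j}. w p)"
    have "(\<Sum>I'\<in>{I'. I \<subseteq> I' \<and> I' \<subseteq> {1..d}}. (-1::real) ^ card (I' - I) *
           (\<Sum>j'\<in>{j'\<in>PiE I' (\<lambda>_. {0..n}). restrict j' I = j}. y (I', j')))
        = (\<Sum>I'\<in>{I'. I \<subseteq> I' \<and> I' \<subseteq> {1..d}}. (-1::real) ^ card (I' - I) * ?W)"
      by (intro sum.cong refl) (simp add: y_def fiber_sum)
    also have "\<dots> = 0" using alt_sum[OF _ I] by (simp add: sum_distrib_right[symmetric])
    finally show "(\<Sum>I'\<in>{I'. I \<subseteq> I' \<and> I' \<subseteq> {1..d}}. (-1::real) ^ card (I' - I) *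
           (\<Sum>j'\<in>{j'\<in>PiE I' (\<lambda>_. {0..n}). restrict j' I = j}. y (I', j'))) = 0" .
  qed
  moreover have "lam i j = y ({i}, restrict (\<lambda>_. j) {i})" if i: "i \<in> {1..d}" and j: "j \<in> {0..n}" for i j
  proof -
    let ?q = "restrict (\<lambda>_. j) {1..d}"
    have q: "?q \<in> Eset d n" using j by (auto simp: Eset_def)
    have "lam i j = lam i (?q i)" using i by simp
    also have "\<dots> = (\<Sum>p\<in>{p\<in>Eset d n. p i = ?q i}. w p)" using marg i q by blast
    also have "\<dots> = y ({i}, restrict (\<lambda>_. j) {i})"
      using i by (simp add: y_def restrict_single_eq)
    finally show ?thesis .
  qed
  ultimately show "(lam, w) \<in> projRLT d n"
    unfolding projRLT_def using zo yD by auto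
qed


lemma sum_fun_apply: "(\<Sum>x\<in>A. f x) y = (\<Sum>x\<in>A. f x y)"
  by (induction A rule: infinite_finite_induct) auto

definition vert :: "nat \<Rightarrow> (nat \<Rightarrow> nat) \<Rightarrow> ((nat \<Rightarrow> nat \<Rightarrow> real) \<times> ((nat \<Rightarrow> nat) \<Rightarrow> real))" where
  "vert d p = ((\<lambda>i j. if i \<in> {1..d} \<and> p i = j then 1 else 0), (\<lambda>q. if q = p then 1 else 0))"

lemma Eset_ext: "p \<in> Eset d n \<Longrightarrow> q \<in> Eset d n \<Longrightarrow> (\<forall>i\<in>{1..d}. p i = q i) \<Longrightarrow> p = q"
  by (auto simp: Eset_def PiE_def extensional_def fun_eq_iff)

lemma vert_in_M: assumes p: "p \<in> Eset d n" shows "vert d p \<in> MLambda d n"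
proof -
  have pr: "p i \<in> {0..n}" if "i \<in> {1..d}" for i using p that by (auto simp: Eset_def)
  have zo: "zero_outside d n (fst (vert d p)) (snd (vert d p))"
    unfolding zero_outside_def vert_def using pr p by auto
  have il: "inLambda d n (fst (vert d p))"
    unfolding inLambda_def vert_def using pr by (auto simp: sum.delta)
  have pp: "snd (vert d p) q = (\<Prod>i\<in>{1..d}. fst (vert d p) i (q i))" if q: "q \<in> Eset d n" for q
  proof (cases "q = p")
    case True then show ?thesis by (simp add: vert_def)
  next
    case False
    then obtain i where i: "i \<in> {1..d}" "p i \<noteq> q i" using Eset_ext[OF p q] by blast
    then show ?thesis using False by (auto simp: vert_def prod_zero_iff intro!: bexI[of _ i])
  qed
  show ?thesis unfolding MLambda_def using zo il pp
    by (cases "vert d p") auto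
qed

lemma convex_R: "convex (Rset d n)"
  unfolding convex_def
proof (intro ballI allI impI)
  fix x y :: "((nat \<Rightarrow> nat \<Rightarrow> real) \<times> ((nat \<Rightarrow> nat) \<Rightarrow> real))" and u v :: real
  assume x: "x \<in> Rset d n" and y: "y \<in> Rset d n" and uv: "0 \<le> u" "0 \<le> v" "u + v = 1"
  obtain l1 w1 where x': "x = (l1, w1)" by (cases x)
  obtain l2 w2 where y': "y = (l2, w2)" by (cases y)
  have e: "u *\<^sub>R x + v *\<^sub>R y = ((\<lambda>i j. u * l1 i j + v * l2 i j), (\<lambda>q. u * w1 q + v * w2 q))"
    by (simp add: x' y' scaleR_fun_def fun_eq_iff)
  have f: "finite {p\<in>Eset d n. p i = k}" for i k using finite_Eset by auto
  show "u *\<^sub>R x + v *\<^sub>R y \<in> Rset d n"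
    unfolding e using x y uv f finite_Eset
    by (auto simp: x' y' Rset_def zero_outside_def sum.distrib sum_distrib_left[symmetric])
qed

lemma M_sub_R: "MLambda d n \<subseteq> Rset d n"
proof safe
  fix lam w assume "(lam, w) \<in> MLambda d n"
  then have zo: "zero_outside d n lam w" and il: "inLambda d n lam"
    and wp: "\<forall>j\<in>Eset d n. w j = (\<Prod>i\<in>{1..d}. lam i (j i))"
    unfolding MLambda_def by auto
  have lnn: "lam i k \<ge> 0" "(\<Sum>j\<in>{0..n}. lam i j) = 1" if "i \<in> {1..d}" "k \<in> {0..n}" for i k
    using il that unfolding inLambda_def by auto
  have jr: "j i \<in> {0..n}" if "j \<in> Eset d n" "i \<in> {1..d}" for i j using that by (auto simp: Eset_def)
  have wnn: "\<forall>j\<in>Eset d n. w j \<ge> 0" using wp lnn jr by (auto intro!: prod_nonneg)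
  have "(\<Sum>j\<in>Eset d n. w j) = (\<Sum>j\<in>Eset d n. \<Prod>i\<in>{1..d}. lam i (j i))" using wp by simp
  also have "\<dots> = (\<Prod>i\<in>{1..d}. \<Sum>k\<in>{0..n}. lam i k)"
    unfolding Eset_def by (rule prod_sum_PiE[symmetric]) auto
  also have "\<dots> = 1" using lnn(2)[of _ 0] by (intro prod.neutral) auto
  finally have s1: "(\<Sum>j\<in>Eset d n. w j) = 1" .
  have marg: "lam i0 (q i0) = (\<Sum>p\<in>{p\<in>Eset d n. p i0 = q i0}. w p)"
    if i0: "i0 \<in> {1..d}" and q: "q \<in> Eset d n" for i0 q
  proof -
    define k where "k = q i0"
    have k: "k \<in> {0..n}" using jr q i0 k_def by auto
    define lam' where "lam' = (\<lambda>i j. if i = i0 then (if j = k then lam i j else 0) else lam i j)"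
    have "(\<Prod>i\<in>{1..d}. \<Sum>j\<in>{0..n}. lam' i j) = (\<Prod>i\<in>{1..d}. if i = i0 then lam i0 k else 1)"
      by (intro prod.cong refl) (use k lnn in \<open>auto simp: lam'_def sum.delta'\<close>)
    also have "\<dots> = lam i0 k" using i0 by (simp add: prod.delta)
    finally have L: "(\<Prod>i\<in>{1..d}. \<Sum>j\<in>{0..n}. lam' i j) = lam i0 k" .
    have "(\<Prod>i\<in>{1..d}. \<Sum>j\<in>{0..n}. lam' i j) = (\<Sum>g\<in>Eset d n. \<Prod>i\<in>{1..d}. lam' i (g i))"
      unfolding Eset_def by (rule prod_sum_PiE) auto
    also have "\<dots> = (\<Sum>g\<in>Eset d n. if g i0 = k then w g else 0)"
    proof (intro sum.cong refl)
      fix g assume g: "g \<in> Eset d n"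
      show "(\<Prod>i\<in>{1..d}. lam' i (g i)) = (if g i0 = k then w g else 0)"
      proof (cases "g i0 = k")
        case True
        then show ?thesis using wp g by (auto simp: lam'_def intro!: prod.cong)
      next
        case False
        then show ?thesis using i0 by (auto simp: lam'_def prod_zero_iff intro!: bexI[of _ i0])
      qed
    qed
    also have "\<dots> = (\<Sum>p\<in>{p\<in>Eset d n. p i0 = k}. w p)"
      using finite_Eset by (simp add: sum.inter_filter)
    finally show ?thesis using L k_def by simp
  qed
  show "(lam, w) \<in> Rset d n" unfolding Rset_def using zo wnn s1 marg by auto
qed

lemma R_sub_hull: "Rset d n \<subseteq> convex hull (MLambda d n)"
proof safe
  fix lam w assume "(lam, w) \<in> Rset d n"
  then have zo: "zero_outside d n lam w" and wnn: "\<forall>j\<in>Eset d n. w j \<ge> 0"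
    and s1: "(\<Sum>j\<in>Eset d n. w j) = 1"
    and marg: "\<forall>i\<in>{1..d}. \<forall>j\<in>Eset d n. lam i (j i) = (\<Sum>p\<in>{p\<in>Eset d n. p i = j i}. w p)"
    unfolding Rset_def by auto
  have mem: "(\<Sum>p\<in>Eset d n. w p *\<^sub>R vert d p) \<in> convex hull (MLambda d n)"
  proof (rule convex_sum[OF finite_Eset convex_convex_hull s1])
    fix p assume "p \<in> Eset d n"
    then show "0 \<le> w p" using wnn by blast
    show "vert d p \<in> convex hull (MLambda d n)" by (rule hull_inc[OF vert_in_M[OF \<open>p \<in> Eset d n\<close>]])
  qed
  have "(\<Sum>p\<in>Eset d n. w p *\<^sub>R vert d p) = (lam, w)"
  proof (rule prod_eqI)
    show "fst (\<Sum>p\<in>Eset d n. w p *\<^sub>R vert d p) = fst (lam, w)"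
    proof (intro ext)
      fix i j
      have "fst (\<Sum>p\<in>Eset d n. w p *\<^sub>R vert d p) i j = (\<Sum>p\<in>Eset d n. w p * (if i \<in> {1..d} \<and> p i = j then 1 else 0))"
        by (simp add: fst_sum sum_fun_apply scaleR_fun_def vert_def)
      also have "\<dots> = lam i j"
      proof (cases "i \<in> {1..d} \<and> j \<in> {0..n}")
        case True
        let ?q = "restrict (\<lambda>_. j) {1..d}"
        have q: "?q \<in> Eset d n" using True by (auto simp: Eset_def)
        have "(\<Sum>p\<in>Eset d n. w p * (if i \<in> {1..d} \<and> p i = j then 1 else 0)) = (\<Sum>p\<in>Eset d n. if p i = ?q i then w p else 0)"
          using True by (intro sum.cong) auto
        also have "\<dots> = (\<Sum>p\<in>{p\<in>Eset d n. p i = ?q i}. w p)"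
          by (rule sum.inter_filter[symmetric, OF finite_Eset])
        also have "\<dots> = lam i (?q i)"
        proof -
          have "i \<in> {1..d}" using True by blast
          then have "lam i (?q i) = (\<Sum>p\<in>{p\<in>Eset d n. p i = ?q i}. w p)" using marg q by blast
          then show ?thesis by (rule sym)
        qed
        finally show ?thesis using True by simp
      next
        case False
        then have "lam i j = 0" using zo unfolding zero_outside_def by auto
        moreover have "(if i \<in> {1..d} \<and> p i = j then 1 else 0) = (0::real)" if "p \<in> Eset d n" for p
          using False that by (auto simp: Eset_def)
        ultimately show ?thesis by simp
      qed
      finally show "fst (\<Sum>p\<in>Eset d n. w p *\<^sub>R vert d p) i j = fst (lam, w) i j" by simp
    qed
  next
    show "snd (\<Sum>p\<in>Eset d n. w p *\<^sub>R vert d p) = snd (lam, w)"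
    proof (intro ext)
      fix q
      have "snd (\<Sum>p\<in>Eset d n. w p *\<^sub>R vert d p) q = (\<Sum>p\<in>Eset d n. w p * (if q = p then 1 else 0))"
        by (simp add: snd_sum sum_fun_apply scaleR_fun_def vert_def)
      also have "\<dots> = (\<Sum>p\<in>Eset d n. if q = p then w p else 0)" by (intro sum.cong) auto
      also have "\<dots> = (if q \<in> Eset d n then w q else 0)" by (simp add: sum.delta finite_Eset)
      also have "\<dots> = w q" using zo unfolding zero_outside_def by auto
      finally show "snd (\<Sum>p\<in>Eset d n. w p *\<^sub>R vert d p) q = snd (lam, w) q" by simp
    qed
  qed
  then show "(lam, w) \<in> convex hull (MLambda d n)" using mem by simp
qed

theorem theorem4p6:
  fixes d n :: nat
  assumes "0 < d" and "0 < n"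
  shows "convex hull (MLambda d n) = projRLT d n \<and> projRLT d n = Rset d n"
proof -
  have PR: "projRLT d n = Rset d n" using proj_sub_R R_sub_proj by blast
  have "convex hull (MLambda d n) \<subseteq> Rset d n"
    by (rule hull_minimal[of "MLambda d n" "Rset d n" convex, OF M_sub_R convex_R])
  then have "convex hull (MLambda d n) = Rset d n" using R_sub_hull by blast
  then show ?thesis using PR by simp
qed

end
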